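(* Every Gauss sequence is an Euler–Gauss sequence. That is, if $(a_n)_{n\ge1}$ is an integer sequence satisfying $\sum_{d\mid n}\mu(d)\,a_{n/d}\equiv 0 \pmod n$ for all $n\ge1$, then $A_n^+\equiv A_n^-\pmod n$ for all $n\ge 1$.
   Context: $\mu$ is the Möbius function. For an integer sequence $(a_n)_{n\ge1}$ and $n\ge1$, $A_n^+=\prod_{d\mid n,\ \mu(d)=1} a_{n/d}$ and $A_n^-=\prod_{d\mid n,\ \mu(d)=-1} a_{n/d}$ (empty products equal $1$). A Gauss sequence is an integer sequence with $\sum_{d\mid n}\mu(d)a_{n/d}\equiv0\pmod n$ for all $n\ge1$; an Euler–Gauss sequence is an integer sequence with $A_n^+\equiv A_n^-\pmod n$ for all $n\ge1$. *)

theory Defs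
  imports "HOL-Computational_Algebra.Computational_Algebra" "HOL-Number_Theory.Number_Theory"
begin

definition moebius_mu :: "nat \<Rightarrow> int" where
  "moebius_mu n = (if n = 0 \<or> \<not> squarefree n then 0 else (-1) ^ card (prime_factors n))"

definition A_plus :: "(nat \<Rightarrow> int) \<Rightarrow> nat \<Rightarrow> int" where
  "A_plus a n = (\<Prod>d \<in> {d. d dvd n \<and> moebius_mu d = 1}. a (n div d))"

definition A_minus :: "(nat \<Rightarrow> int) \<Rightarrow> nat \<Rightarrow> int" where
  "A_minus a n = (\<Prod>d \<in> {d. d dvd n \<and> moebius_mu d = -1}. a (n div d))"

definition gauss_seq :: "(nat \<Rightarrow> int) \<Rightarrow> bool" where
  "gauss_seq a \<longleftrightarrow> (\<forall>n\<ge>1. [(\<Sum>d | d dvd n. moebius_mu d * a (n div d)) = 0] (mod int n))"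

definition euler_gauss_seq :: "(nat \<Rightarrow> int) \<Rightarrow> bool" where
  "euler_gauss_seq a \<longleftrightarrow> (\<forall>n\<ge>1. [A_plus a n = A_minus a n] (mod int n))"

end

theory Submission
  imports Defs
begin

lemma mu_cases: "moebius_mu d = 0 \<or> moebius_mu d = 1 \<or> moebius_mu d = -1"
  unfolding moebius_mu_def by (auto simp: minus_one_power_iff)

lemma mu_nz: "moebius_mu d \<noteq> 0 \<longleftrightarrow> d > 0 \<and> squarefree d"
  unfolding moebius_mu_def by auto

lemma mu_1[simp]: "moebius_mu 1 = 1"
  unfolding moebius_mu_def by auto

lemma mu_prime_mult:
  assumes p: "prime (p::nat)" and np: "\<not> p dvd e" and e: "e > 0"
  shows "moebius_mu (p * e) = - moebius_mu e"
proof -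
  have cop: "coprime p e" using p np by (simp add: prime_imp_coprime)
  have sq: "squarefree (p*e) \<longleftrightarrow> squarefree e"
    using squarefree_mult_coprime[OF cop squarefree_prime[OF p]] squarefree_multD(2) by blast
  have pf: "prime_factors (p*e) = insert p (prime_factors e)"
    using prime_factors_product[of p e] p e prime_prime_factors[OF p] by auto
  have pn: "p \<notin> prime_factors e" using np by auto
  show ?thesis using sq pf pn e p unfolding moebius_mu_def by auto
qed


lemma split_set:
  assumes p: "prime (p::nat)" and k: "k \<ge> 1" and np: "\<not> p dvd m" and s: "s \<noteq> 0"
  shows "{d. d dvd p^k*m \<and> moebius_mu d = s} =
     {e. e dvd m \<and> moebius_mu e = s} \<union> (\<lambda>e. p*e) ` {e. e dvd m \<and> moebius_mu e = -s}"
proof (intro equalityI subsetI)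
  fix d assume "d \<in> {d. d dvd p^k*m \<and> moebius_mu d = s}"
  hence dd: "d dvd p^k*m" and md: "moebius_mu d = s" by auto
  hence d0: "d > 0" and sqd: "squarefree d" using s mu_nz by metis+
  show "d \<in> {e. e dvd m \<and> moebius_mu e = s} \<union> (\<lambda>e. p*e) ` {e. e dvd m \<and> moebius_mu e = -s}"
  proof (cases "p dvd d")
    case False
    hence "coprime d (p^k)" using p by (metis prime_imp_coprime coprime_commute coprime_power_right_iff)
    hence "d dvd m" using dd by (simp add: coprime_dvd_mult_right_iff)
    thus ?thesis using md by auto
  next
    case True
    then obtain e where de: "d = p*e" by blast
    have npe: "\<not> p dvd e"
    proof
      assume "p dvd e"
      hence "p^2 dvd d" using de by (auto simp: power2_eq_square)
      thus False using sqd p unfolding squarefree_def by auto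
    qed
    have e0: "e > 0" using d0 de by auto
    have me: "moebius_mu e = -s" using mu_prime_mult[OF p npe e0] md de by simp
    obtain j where kj: "k = Suc j" using k by (cases k) auto
    have "p*e dvd p*(p^j*m)" using dd de kj by (simp add: mult.assoc)
    hence "e dvd p^j*m" using p by (simp add: prime_gt_0_nat)
    moreover have "coprime e (p^j)" using npe p by (metis prime_imp_coprime coprime_commute coprime_power_right_iff)
    ultimately have "e dvd m" by (simp add: coprime_dvd_mult_right_iff)
    thus ?thesis using me de by auto
  qed
next
  fix d assume "d \<in> {e. e dvd m \<and> moebius_mu e = s} \<union> (\<lambda>e. p*e) ` {e. e dvd m \<and> moebius_mu e = -s}"
  thus "d \<in> {d. d dvd p^k*m \<and> moebius_mu d = s}"
  proof
    assume "d \<in> {e. e dvd m \<and> moebius_mu e = s}" thus ?thesis by auto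
  next
    assume "d \<in> (\<lambda>e. p*e) ` {e. e dvd m \<and> moebius_mu e = -s}"
    then obtain e where de: "d = p*e" and em: "e dvd m" and me: "moebius_mu e = -s" by auto
    have e0: "e > 0" using me s mu_nz by (metis neg_equal_0_iff_equal)
    have npe: "\<not> p dvd e" using em np dvd_trans by blast
    have "moebius_mu d = s" using mu_prime_mult[OF p npe e0] me de by simp
    moreover have "p*e dvd p^k*m" using em k by (intro mult_dvd_mono) (auto simp: dvd_power)
    ultimately show ?thesis using de by auto
  qed
qed

lemma split_disj:
  assumes np: "\<not> (p::nat) dvd m"
  shows "{e. e dvd m \<and> moebius_mu e = s} \<inter> (\<lambda>e. p*e) ` {e. e dvd m \<and> moebius_mu e = t} = {}"
  using np dvd_trans by fastforce


lemma fin_div: "m > 0 \<Longrightarrow> finite {e::nat. e dvd m \<and> P e}"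
  by (rule finite_subset[of _ "{..m}"]) (auto dest: dvd_imp_le)

lemma prod_split:
  fixes f :: "nat \<Rightarrow> int"
  assumes p: "prime (p::nat)" and k: "k \<ge> 1" and np: "\<not> p dvd m" and s: "s \<noteq> 0" and m: "m > 0"
  shows "(\<Prod>d\<in>{d. d dvd p^k*m \<and> moebius_mu d = s}. f d) =
     (\<Prod>e\<in>{e. e dvd m \<and> moebius_mu e = s}. f e) * (\<Prod>e\<in>{e. e dvd m \<and> moebius_mu e = -s}. f (p*e))"
proof -
  have inj: "inj_on (\<lambda>e. p*e) A" for A using p by (auto simp: inj_on_def prime_gt_0_nat)
  show ?thesis
    unfolding split_set[OF p k np s]
    by (subst prod.union_disjoint) (auto simp: fin_div[OF m] split_disj[OF np] prod.reindex[OF inj])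
qed

lemma sum_split:
  fixes f :: "nat \<Rightarrow> int"
  assumes p: "prime (p::nat)" and k: "k \<ge> 1" and np: "\<not> p dvd m" and s: "s \<noteq> 0" and m: "m > 0"
  shows "(\<Sum>d\<in>{d. d dvd p^k*m \<and> moebius_mu d = s}. f d) =
     (\<Sum>e\<in>{e. e dvd m \<and> moebius_mu e = s}. f e) + (\<Sum>e\<in>{e. e dvd m \<and> moebius_mu e = -s}. f (p*e))"
proof -
  have inj: "inj_on (\<lambda>e. p*e) A" for A using p by (auto simp: inj_on_def prime_gt_0_nat)
  show ?thesis
    unfolding split_set[OF p k np s]
    by (subst sum.union_disjoint) (auto simp: fin_div[OF m] split_disj[OF np] sum.reindex[OF inj])
qed

lemma sum_mu:
  fixes g :: "nat \<Rightarrow> int"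
  assumes n: "n > 0"
  shows "(\<Sum>d | d dvd n. moebius_mu d * g d) =
    (\<Sum>d\<in>{d. d dvd n \<and> moebius_mu d = 1}. g d) - (\<Sum>d\<in>{d. d dvd n \<and> moebius_mu d = -1}. g d)"
proof -
  have "(\<Sum>d | d dvd n. moebius_mu d * g d) =
     (\<Sum>d | d dvd n. (if moebius_mu d = 1 then g d else 0) - (if moebius_mu d = -1 then g d else 0))"
    by (rule sum.cong) (use mu_cases in auto)
  also have "\<dots> = (\<Sum>d | d dvd n. (if moebius_mu d = 1 then g d else 0)) -
      (\<Sum>d | d dvd n. (if moebius_mu d = -1 then g d else 0))"
    by (simp add: sum_subtractf)
  also have "\<dots> = (\<Sum>d\<in>{d. d dvd n \<and> moebius_mu d = 1}. g d) - (\<Sum>d\<in>{d. d dvd n \<and> moebius_mu d = -1}. g d)"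
    using fin_div[OF n, of "\<lambda>_. True"]
    by (simp add: sum.inter_filter[symmetric] conj_commute)
  finally show ?thesis .
qed

lemma div_helpers:
  assumes "e dvd (m::nat)" "k \<ge> 1" "prime p"
  shows "p^k*m div e = p^k*(m div e)" "p^k*m div (p*e) = p^(k-1)*(m div e)"
proof -
  obtain c where c: "m = e*c" using assms(1) by blast
  obtain j where kj: "k = Suc j" using assms(2) by (cases k) auto
  have p0: "p > 0" using assms(3) prime_gt_0_nat by blast
  show "p^k*m div e = p^k*(m div e)"
    using c by (cases "e = 0") auto
  show "p^k*m div (p*e) = p^(k-1)*(m div e)"
    using c kj p0 by (cases "e = 0") (auto simp: ac_simps)
qed


lemma key:
  assumes G: "gauss_seq a" and p: "prime (p::nat)" and k: "k \<ge> 1"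
  shows "m > 0 \<Longrightarrow> \<not> p dvd m \<Longrightarrow> int (p^k) dvd a (p^k*m) - a (p^(k-1)*m)"
proof (induction m rule: less_induct)
  case (less m)
  define n where "n = p^k*m"
  define h where "h e = a (p^k*(m div e)) - a (p^(k-1)*(m div e))" for e
  have p0: "p > 0" using p prime_gt_0_nat by blast
  have n0: "n \<ge> 1" using less.prems p0 by (simp add: n_def)
  have "[(\<Sum>d | d dvd n. moebius_mu d * a (n div d)) = 0] (mod int n)"
    using G n0 unfolding gauss_seq_def by blast
  hence "int n dvd (\<Sum>d | d dvd n. moebius_mu d * a (n div d))"
    by (simp add: cong_0_iff)
  hence D: "int (p^k) dvd (\<Sum>d | d dvd n. moebius_mu d * a (n div d))"
    unfolding n_def by (metis dvd_mult_left of_nat_mult)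
  have m1: "(1::int) \<noteq> 0" "(-1::int) \<noteq> 0" by auto
  have "(\<Sum>d | d dvd n. moebius_mu d * a (n div d)) =
    ((\<Sum>e\<in>{e. e dvd m \<and> moebius_mu e = 1}. a (n div e)) + (\<Sum>e\<in>{e. e dvd m \<and> moebius_mu e = -1}. a (n div (p*e))))
   - ((\<Sum>e\<in>{e. e dvd m \<and> moebius_mu e = -1}. a (n div e)) + (\<Sum>e\<in>{e. e dvd m \<and> moebius_mu e = 1}. a (n div (p*e))))"
    using sum_mu[of n "\<lambda>d. a (n div d)"] n0 
    using sum_split[OF p k less.prems(2) m1(1) less.prems(1), of "\<lambda>d. a (n div d)"] 
      sum_split[OF p k less.prems(2) m1(2) less.prems(1), of "\<lambda>d. a (n div d)"]
    unfolding n_def[symmetric] by simp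
  also have "\<dots> = (\<Sum>e\<in>{e. e dvd m \<and> moebius_mu e = 1}. h e) - (\<Sum>e\<in>{e. e dvd m \<and> moebius_mu e = -1}. h e)"
  proof -
    have "(\<Sum>e\<in>{e. e dvd m \<and> moebius_mu e = s}. a (n div e)) = (\<Sum>e\<in>{e. e dvd m \<and> moebius_mu e = s}. a (p^k*(m div e)))" for s
      by (rule sum.cong) (auto simp: n_def div_helpers[OF _ k p])
    moreover have "(\<Sum>e\<in>{e. e dvd m \<and> moebius_mu e = s}. a (n div (p*e))) = (\<Sum>e\<in>{e. e dvd m \<and> moebius_mu e = s}. a (p^(k-1)*(m div e)))" for s
      by (rule sum.cong) (auto simp: n_def div_helpers[OF _ k p])
    ultimately show ?thesis unfolding h_def by (simp add: sum_subtractf)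
  qed
  also have "\<dots> = (\<Sum>e | e dvd m. moebius_mu e * h e)"
    using sum_mu[OF less.prems(1), of h] by simp
  also have "\<dots> = moebius_mu 1 * h 1 + (\<Sum>e \<in> {e. e dvd m} - {1}. moebius_mu e * h e)"
    by (subst sum.remove[of _ 1]) (use fin_div[OF less.prems(1), of "\<lambda>_. True"] in auto)
  finally have E: "(\<Sum>d | d dvd n. moebius_mu d * a (n div d)) = h 1 + (\<Sum>e \<in> {e. e dvd m} - {1}. moebius_mu e * h e)"
    using mu_1 by (simp del: One_nat_def)
  have "int (p^k) dvd (\<Sum>e \<in> {e. e dvd m} - {1}. moebius_mu e * h e)"
  proof (rule dvd_sum)
    fix e assume e: "e \<in> {e. e dvd m} - {1}"
    then obtain c where c: "m = e*c" by blast
    have c0: "c > 0" "e > 0" using c less.prems(1) by auto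
    have "e \<ge> 2" using e c0 by auto
    hence "1 * c < e * c" using c0 by (intro mult_strict_right_mono) auto
    hence "c < m" using c by simp
    moreover have "\<not> p dvd c" using c less.prems(2) dvd_mult by blast
    moreover have "m div e = c" using c c0 by simp
    ultimately have "int (p^k) dvd h e" using less.IH[of c] c0 unfolding h_def by simp
    thus "int (p^k) dvd moebius_mu e * h e" by simp
  qed
  moreover have "h 1 = (\<Sum>d | d dvd n. moebius_mu d * a (n div d)) - (\<Sum>e \<in> {e. e dvd m} - {1}. moebius_mu e * h e)"
    using E by simp
  ultimately have "int (p^k) dvd h 1" using D by (simp add: dvd_diff)
  thus ?case unfolding h_def by simp
qed


lemma local_cong:
  assumes G: "gauss_seq a" and p: "prime (p::nat)" and k: "k \<ge> 1" and np: "\<not> p dvd m" and m: "m > 0"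
  shows "int (p^k) dvd A_plus a (p^k*m) - A_minus a (p^k*m)"
proof -
  define n where "n = p^k*m"
  have m1: "(1::int) \<noteq> 0" "(-1::int) \<noteq> 0" by auto
  define P where "P s = (\<Prod>e\<in>{e. e dvd m \<and> moebius_mu e = s}. a (n div e))" for s
  define Q where "Q s = (\<Prod>e\<in>{e. e dvd m \<and> moebius_mu e = s}. a (n div (p*e)))" for s
  have Ap: "A_plus a n = P 1 * Q (-1)"
    unfolding A_plus_def P_def Q_def n_def
    using prod_split[OF p k np m1(1) m, of "\<lambda>d. a (p^k*m div d)"] by simp
  have Am: "A_minus a n = P (-1) * Q 1"
    unfolding A_minus_def P_def Q_def n_def
    using prod_split[OF p k np m1(2) m, of "\<lambda>d. a (p^k*m div d)"] by simp
  have PQ: "[P s = Q s] (mod int (p^k))" for s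
    unfolding P_def Q_def
  proof (rule cong_prod)
    fix e assume e: "e \<in> {e. e dvd m \<and> moebius_mu e = s}"
    then obtain c where c: "m = e*c" by blast
    have c0: "c > 0" "e > 0" using c m by auto
    have "\<not> p dvd c" using c np dvd_mult by blast
    hence "int (p^k) dvd a (p^k*c) - a (p^(k-1)*c)" using key[OF G p k] c0 by blast
    moreover have "m div e = c" using c c0 by simp
    moreover have "e dvd m" using e by simp
    ultimately have "n div e = p^k*c" "n div (p*e) = p^(k-1)*c" 
      unfolding n_def using div_helpers[OF _ k p] by metis+
    thus "[a (n div e) = a (n div (p * e))] (mod int (p ^ k))"
      using \<open>int (p^k) dvd a (p^k*c) - a (p^(k-1)*c)\<close> by (simp only: cong_iff_dvd_diff)
  qed
  have "[A_plus a n = A_minus a n] (mod int (p^k))"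
    unfolding Ap Am using cong_mult[OF PQ[of 1] cong_sym[OF PQ[of "-1"]]]
    by (simp add: mult.commute)
  thus ?thesis unfolding n_def by (simp add: cong_iff_dvd_diff)
qed

theorem theorem1:
  fixes a :: "nat \<Rightarrow> int"
  assumes "gauss_seq a"
  shows "euler_gauss_seq a"
  unfolding euler_gauss_seq_def
proof (intro allI impI)
  fix n :: nat assume n: "n \<ge> 1"
  define X where "X = A_plus a n - A_minus a n"
  have "int n dvd X"
  proof (cases "X = 0")
    case True thus ?thesis by simp
  next
    case X0: False
  have "n dvd nat \<bar>X\<bar>"
  proof (rule multiplicity_le_imp_dvd)
    show "n \<noteq> 0" using n by simp
  next
    fix p :: nat assume p: "prime p"
    define k where "k = multiplicity p n"
    obtain m where nm: "n = p^k*m" and np: "\<not> p dvd m"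
    proof -
      have "n \<noteq> 0" "\<not> is_unit p" using n p by (auto simp: not_prime_unit)
      from multiplicity_decompose'[OF this] that show thesis unfolding k_def by blast
    qed
    have m: "m > 0" using nm n by (cases "m = 0") auto
    show "multiplicity p n \<le> multiplicity p (nat \<bar>X\<bar>)"
    proof (cases "k = 0")
      case True thus ?thesis unfolding k_def by simp
    next
      case False
      hence k1: "k \<ge> 1" by simp
      have "int (p^k) dvd X" unfolding X_def using local_cong[OF assms p k1 np m] nm by simp
      hence "int (p^k) dvd \<bar>X\<bar>" by (simp only: dvd_abs_iff)
      hence "int (p^k) dvd int (nat \<bar>X\<bar>)" by simp
      hence "p^k dvd nat \<bar>X\<bar>" by (simp only: int_dvd_int_iff)
      moreover have "nat \<bar>X\<bar> \<noteq> 0" "\<not> is_unit p" using X0 p by (auto simp: not_prime_unit)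
      ultimately have "k \<le> multiplicity p (nat \<bar>X\<bar>)" using power_dvd_iff_le_multiplicity by blast
      thus ?thesis unfolding k_def .
    qed
  qed
  hence "int n dvd int (nat \<bar>X\<bar>)" by (simp only: int_dvd_int_iff)
  hence "int n dvd \<bar>X\<bar>" by simp
  hence "int n dvd X" by (simp only: dvd_abs_iff)
  thus ?thesis .
  qed
  thus "[A_plus a n = A_minus a n] (mod int n)" unfolding X_def by (simp add: cong_iff_dvd_diff)
qed

end
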